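(* Let $G=(V,E)$ be a finite connected graph with $n=|V|\ge2$ vertices such that the equation $DK=n\mathbf{1}_n$ admits at least one solution $K\in\mathbb{R}^n$. Then the following are equivalent: (a) $G$ is antipodal; (b) $G$ is self-centered and Bonnet–Myers sharp.
   Context: All graphs are finite, simple, connected and undirected, with the combinatorial shortest-path distance $d$. For $V=\{v_1,\dots,v_n\}$, $D=(d(v_i,v_j))_{i,j=1}^n$ is the distance matrix and $\mathbf{1}_n$ the all-ones column vector. When $DK=n\mathbf{1}_n$ has solutions, the Steinerberger curvature is a solution $K$ for which $\min_iK_i$ is maximal among all solutions (the unique solution if there is only one). $G$ is Bonnet–Myers sharp if $DK=n\mathbf{1}_n$ has a solution and its Steinerberger curvature $K$ satisfies $\min_iK_i=2/\mathrm{diam}(G)$ (equivalently, some solution $K$ has $\min_i K_i=2/\mathrm{diam}(G)$). $G$ is self-centered if for every $x\in V$ there exists $\hat x\in V$ with $d(x,\hat x)=\mathrm{diam}(G)$. For $x,y\in V$ let $[x,y]=\{z\in V: d(x,y)=d(x,z)+d(z,y)\}$; $G$ is antipodal if for every $x\in V$ there exists $\hat x\in V$ with $[x,\hat x]=V$. *)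

theory Defs
  imports Complex_Main
begin

text \<open>A finite simple graph on the vertex set V with adjacency relation E
(symmetric, irreflexive on V). Edges with an endpoint outside V are ignored.\<close>

definition adj_rel :: "'a set \<Rightarrow> ('a \<Rightarrow> 'a \<Rightarrow> bool) \<Rightarrow> ('a \<times> 'a) set" where
  "adj_rel V E = {(x, y). x \<in> V \<and> y \<in> V \<and> E x y}"

definition simple_graph :: "'a set \<Rightarrow> ('a \<Rightarrow> 'a \<Rightarrow> bool) \<Rightarrow> bool" where
  "simple_graph V E \<longleftrightarrow> finite V \<and> (\<forall>x\<in>V. \<forall>y\<in>V. E x y \<longrightarrow> E y x) \<and> (\<forall>x\<in>V. \<not> E x x)"

definition connected_graph :: "'a set \<Rightarrow> ('a \<Rightarrow> 'a \<Rightarrow> bool) \<Rightarrow> bool" where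
  "connected_graph V E \<longleftrightarrow> (\<forall>x\<in>V. \<forall>y\<in>V. \<exists>k. (x, y) \<in> adj_rel V E ^^ k)"

definition gdist :: "'a set \<Rightarrow> ('a \<Rightarrow> 'a \<Rightarrow> bool) \<Rightarrow> 'a \<Rightarrow> 'a \<Rightarrow> nat" where
  "gdist V E x y = (LEAST k. (x, y) \<in> adj_rel V E ^^ k)"

definition diam :: "'a set \<Rightarrow> ('a \<Rightarrow> 'a \<Rightarrow> bool) \<Rightarrow> nat" where
  "diam V E = Max {gdist V E x y | x y. x \<in> V \<and> y \<in> V}"

text \<open>K solves D K = n 1_n (vectors indexed by the vertices).\<close>
definition curv_solution :: "'a set \<Rightarrow> ('a \<Rightarrow> 'a \<Rightarrow> bool) \<Rightarrow> ('a \<Rightarrow> real) \<Rightarrow> bool" where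
  "curv_solution V E K \<longleftrightarrow>
     (\<forall>x\<in>V. (\<Sum>y\<in>V. real (gdist V E x y) * K y) = real (card V))"

definition minK :: "'a set \<Rightarrow> ('a \<Rightarrow> real) \<Rightarrow> real" where
  "minK V K = Min (K ` V)"

definition steinerberger_curvature :: "'a set \<Rightarrow> ('a \<Rightarrow> 'a \<Rightarrow> bool) \<Rightarrow> ('a \<Rightarrow> real) \<Rightarrow> bool" where
  "steinerberger_curvature V E K \<longleftrightarrow> curv_solution V E K \<and>
     (\<forall>K'. curv_solution V E K' \<longrightarrow> minK V K' \<le> minK V K)"

definition bonnet_myers_sharp :: "'a set \<Rightarrow> ('a \<Rightarrow> 'a \<Rightarrow> bool) \<Rightarrow> bool" where
  "bonnet_myers_sharp V E \<longleftrightarrow>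
     (\<exists>K. steinerberger_curvature V E K \<and> minK V K = 2 / real (diam V E))"

definition self_centered :: "'a set \<Rightarrow> ('a \<Rightarrow> 'a \<Rightarrow> bool) \<Rightarrow> bool" where
  "self_centered V E \<longleftrightarrow> (\<forall>x\<in>V. \<exists>x'\<in>V. gdist V E x x' = diam V E)"

definition interval :: "'a set \<Rightarrow> ('a \<Rightarrow> 'a \<Rightarrow> bool) \<Rightarrow> 'a \<Rightarrow> 'a \<Rightarrow> 'a set" where
  "interval V E x y = {z \<in> V. gdist V E x y = gdist V E x z + gdist V E z y}"

definition antipodal :: "'a set \<Rightarrow> ('a \<Rightarrow> 'a \<Rightarrow> bool) \<Rightarrow> bool" where
  "antipodal V E \<longleftrightarrow> (\<forall>x\<in>V. \<exists>x'\<in>V. interval V E x x' = V)"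

end

theory Submission
  imports Defs
begin

lemma relpow_sym:
  assumes "\<And>a b. (a,b) \<in> R \<Longrightarrow> (b,a) \<in> R"
  shows "(x,y) \<in> R ^^ k \<Longrightarrow> (y,x) \<in> R ^^ k"
proof (induction k arbitrary: x y)
  case 0 then show ?case by simp
next
  case (Suc k)
  then obtain z where "(x,z) \<in> R ^^ k" "(z,y) \<in> R" by auto
  then have "(z,x) \<in> R ^^ k" "(y,z) \<in> R" using Suc assms by auto
  then show ?case using relpow_Suc_I2 by metis
qed

locale G =
  fixes V :: "'a set" and E :: "'a \<Rightarrow> 'a \<Rightarrow> bool"
  assumes sg: "simple_graph V E" and cg: "connected_graph V E"
begin

abbreviation "d \<equiv> gdist V E"

lemma fin: "finite V" using sg by (simp add: simple_graph_def)

lemma reach: "x \<in> V \<Longrightarrow> y \<in> V \<Longrightarrow> (x,y) \<in> adj_rel V E ^^ d x y"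
  unfolding gdist_def using cg unfolding connected_graph_def by (meson LeastI_ex)

lemma least: "(x,y) \<in> adj_rel V E ^^ k \<Longrightarrow> d x y \<le> k"
  unfolding gdist_def by (rule Least_le)

lemma dsym: "x \<in> V \<Longrightarrow> y \<in> V \<Longrightarrow> d x y = d y x"
proof -
  have s: "\<And>a b. (a,b) \<in> adj_rel V E \<Longrightarrow> (b,a) \<in> adj_rel V E"
    using sg by (auto simp: adj_rel_def simple_graph_def)
  assume "x \<in> V" "y \<in> V"
  then show ?thesis using reach[of x y] reach[of y x] relpow_sym[OF s] least
    by (meson le_antisym)
qed

lemma tri: "x \<in> V \<Longrightarrow> y \<in> V \<Longrightarrow> z \<in> V \<Longrightarrow> d x z \<le> d x y + d y z"
proof -
  assume "x \<in> V" "y \<in> V" "z \<in> V"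
  then have "(x,z) \<in> adj_rel V E ^^ (d x y + d y z)"
    using reach[of x y] reach[of y z] by (auto simp: relpow_add)
  then show ?thesis by (rule least)
qed

lemma d0: "d x x = 0"
  using least[of x x 0] by simp

lemma d0E: "x \<in> V \<Longrightarrow> y \<in> V \<Longrightarrow> d x y = 0 \<Longrightarrow> x = y"
  using reach[of x y] by simp

lemma finD: "finite {gdist V E x y | x y. x \<in> V \<and> y \<in> V}"
proof -
  have "{gdist V E x y | x y. x \<in> V \<and> y \<in> V} = (\<lambda>(x,y). d x y) ` (V \<times> V)" by auto
  then show ?thesis using fin by simp
qed

lemma diam_ge: "x \<in> V \<Longrightarrow> y \<in> V \<Longrightarrow> d x y \<le> diam V E"
  unfolding diam_def
  by (rule Max_ge) (use finD in auto)

lemma diam_att: "V \<noteq> {} \<Longrightarrow> \<exists>x\<in>V. \<exists>y\<in>V. d x y = diam V E"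
proof -
  assume "V \<noteq> {}"
  then have "{gdist V E x y | x y. x \<in> V \<and> y \<in> V} \<noteq> {}" by auto
  moreover have "finite {gdist V E x y | x y. x \<in> V \<and> y \<in> V}"
    using finD by auto
  ultimately have "diam V E \<in> {gdist V E x y | x y. x \<in> V \<and> y \<in> V}"
    unfolding diam_def using Max_in by blast
  then obtain x y where "x \<in> V" "y \<in> V" "diam V E = d x y" by blast
  then show ?thesis by metis
qed


lemma two_pts: "card V \<ge> 2 \<Longrightarrow> \<exists>a\<in>V. \<exists>b\<in>V. a \<noteq> b"
proof -
  assume c: "card V \<ge> 2"
  then have "V \<noteq> {}" by auto
  then obtain a where a: "a \<in> V" by auto
  show ?thesis
  proof (rule ccontr)
    assume "\<not> ?thesis"
    then have "V \<subseteq> {a}" using a by auto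
    then have "card V \<le> 1" using card_mono[of "{a}" V] by simp
    then show False using c by simp
  qed
qed

lemma Dpos: "card V \<ge> 2 \<Longrightarrow> diam V E > 0"
proof -
  assume "card V \<ge> 2"
  then obtain a b where "a \<in> V" "b \<in> V" "a \<noteq> b" using two_pts by blast
  then have "d a b \<noteq> 0" using d0E by blast
  then show ?thesis using diam_ge[of a b] \<open>a \<in> V\<close> \<open>b \<in> V\<close> by simp
qed

lemma minK_le: "z \<in> V \<Longrightarrow> minK V K \<le> K z"
  unfolding minK_def using fin by simp

lemma bound:
  assumes K: "curv_solution V E K" and x: "x \<in> V" and y: "y \<in> V"
    and dxy: "d x y = diam V E" and Dp: "diam V E > 0"
  shows "minK V K \<le> 2 / real (diam V E)"
proof (cases "minK V K \<le> 0")
  case True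
  have "2 / real (diam V E) > 0" using Dp by simp
  then show ?thesis using True by linarith
next
  case False
  define D where "D = real (diam V E)"
  define m where "m = minK V K"
  have Dp': "D > 0" using Dp D_def by simp
  have Km: "\<And>z. z \<in> V \<Longrightarrow> m \<le> K z" using minK_le m_def by blast
  have m0: "m > 0" using False m_def by simp
  have sx: "(\<Sum>z\<in>V. real (d x z) * K z) = real (card V)" using K x by (simp add: curv_solution_def)
  have sy: "(\<Sum>z\<in>V. real (d y z) * K z) = real (card V)" using K y by (simp add: curv_solution_def)
  have "(\<Sum>z\<in>V. (real (d x z) + real (d z y)) * K z) = (\<Sum>z\<in>V. real (d x z) * K z) + (\<Sum>z\<in>V. real (d y z) * K z)"
  proof -
    have "\<And>z. z \<in> V \<Longrightarrow> (real (d x z) + real (d z y)) * K z = real (d x z) * K z + real (d y z) * K z"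
      using dsym y by (metis distrib_right)
    then show ?thesis by (simp add: sum.distrib)
  qed
  also have "\<dots> = 2 * real (card V)" using sx sy by simp
  finally have s2: "(\<Sum>z\<in>V. (real (d x z) + real (d z y)) * K z) = 2 * real (card V)" .
  have "(\<Sum>z\<in>V. D * m) \<le> (\<Sum>z\<in>V. (real (d x z) + real (d z y)) * K z)"
  proof (rule sum_mono)
    fix z assume z: "z \<in> V"
    have "d x y \<le> d x z + d z y" using tri x y z by blast
    then have "D \<le> real (d x z) + real (d z y)" using dxy D_def by simp
    then show "D * m \<le> (real (d x z) + real (d z y)) * K z"
      by (rule mult_mono) (use Km[OF z] m0 Dp' in auto)
  qed
  then have "real (card V) * (D * m) \<le> real (card V) * 2" using s2 by simp
  moreover have "real (card V) > 0" using x fin card_gt_0_iff by auto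
  ultimately have "D * m \<le> 2" using mult_le_cancel_left_pos by blast
  then have "m \<le> 2 / D" using Dp' by (simp add: pos_le_divide_eq mult.commute)
  then show ?thesis using m_def D_def by simp
qed


lemma BtoA:
  assumes sc: "self_centered V E" and c2: "card V \<ge> 2"
    and K: "steinerberger_curvature V E K" and mK: "minK V K = 2 / real (diam V E)"
  shows "antipodal V E"
  unfolding antipodal_def
proof
  fix x assume x: "x \<in> V"
  obtain x' where x': "x' \<in> V" "d x x' = diam V E" using sc x unfolding self_centered_def by blast
  define D where "D = real (diam V E)"
  have Dp: "D > 0" using Dpos[OF c2] D_def by simp
  have Ks: "curv_solution V E K" using K by (simp add: steinerberger_curvature_def)
  have Kz: "\<And>z. z \<in> V \<Longrightarrow> 2 / D \<le> K z" using minK_le mK D_def by metis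
  have Kp: "\<And>z. z \<in> V \<Longrightarrow> K z > 0" using Kz Dp
    by (meson divide_pos_pos less_le_trans zero_less_numeral)
  define t where "t z = (real (d x z) + real (d z x') - D) * K z" for z
  have tnn: "\<And>z. z \<in> V \<Longrightarrow> t z \<ge> 0"
  proof -
    fix z assume z: "z \<in> V"
    have "d x x' \<le> d x z + d z x'" using tri x x' z by blast
    then have "real (d x z) + real (d z x') - D \<ge> 0" using x' D_def by simp
    then show "t z \<ge> 0" unfolding t_def using Kp[OF z] by simp
  qed
  have sx: "(\<Sum>z\<in>V. real (d x z) * K z) = real (card V)" using Ks x by (simp add: curv_solution_def)
  have sy: "(\<Sum>z\<in>V. real (d x' z) * K z) = real (card V)" using Ks x' by (simp add: curv_solution_def)
  have eq: "\<And>z. z \<in> V \<Longrightarrow> t z = real (d x z) * K z + real (d x' z) * K z - D * K z"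
    unfolding t_def using dsym x' by (metis left_diff_distrib distrib_right)
  have "(\<Sum>z\<in>V. t z) = (\<Sum>z\<in>V. real (d x z) * K z) + (\<Sum>z\<in>V. real (d x' z) * K z) - (\<Sum>z\<in>V. D * K z)"
    using eq by (simp add: sum.distrib sum_subtractf)
  also have "\<dots> = 2 * real (card V) - D * (\<Sum>z\<in>V. K z)" using sx sy by (simp add: sum_distrib_left)
  also have "\<dots> \<le> 0"
  proof -
    have "(\<Sum>z\<in>V. 2 / D) \<le> (\<Sum>z\<in>V. K z)" using Kz by (rule sum_mono)
    then have "real (card V) * (2 / D) \<le> (\<Sum>z\<in>V. K z)" by simp
    then have "D * (real (card V) * (2 / D)) \<le> D * (\<Sum>z\<in>V. K z)" using Dp by (rule mult_left_mono[OF _ less_imp_le])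
    moreover have "D * (real (card V) * (2 / D)) = 2 * real (card V)" using Dp by simp
    ultimately show ?thesis by linarith
  qed
  finally have "(\<Sum>z\<in>V. t z) \<le> 0" .
  then have "(\<Sum>z\<in>V. t z) = 0" using sum_nonneg[of V t, OF tnn] by linarith
  then have t0: "\<And>z. z \<in> V \<Longrightarrow> t z = 0" using sum_nonneg_eq_0_iff[OF fin] tnn by blast
  have "interval V E x x' = V"
  proof
    show "interval V E x x' \<subseteq> V" unfolding interval_def by auto
    show "V \<subseteq> interval V E x x'"
    proof
      fix z assume z: "z \<in> V"
      have "real (d x z) + real (d z x') - D = 0" using t0[OF z] Kp[OF z] unfolding t_def by simp
      then have "d x x' = d x z + d z x'" using x' D_def by simp
      then show "z \<in> interval V E x x'" using z unfolding interval_def by simp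
    qed
  qed
  then show "\<exists>x'\<in>V. interval V E x x' = V" using x' by blast
qed

lemma AtoB:
  assumes ap: "antipodal V E" and c2: "card V \<ge> 2"
  shows "self_centered V E \<and> bonnet_myers_sharp V E"
proof -
  obtain f where f: "\<And>x. x \<in> V \<Longrightarrow> f x \<in> V \<and> interval V E x (f x) = V"
    using ap unfolding antipodal_def by metis
  have fV: "\<And>x. x \<in> V \<Longrightarrow> f x \<in> V" using f by blast
  have I: "\<And>x z. x \<in> V \<Longrightarrow> z \<in> V \<Longrightarrow> d x (f x) = d x z + d z (f x)"
  proof -
    fix x z assume "x \<in> V" "z \<in> V"
    then have "z \<in> interval V E x (f x)" using f by blast
    then show "d x (f x) = d x z + d z (f x)" unfolding interval_def by simp
  qed
  have Dp: "diam V E > 0" using Dpos[OF c2] .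
  then have "V \<noteq> {}" using c2 by auto
  then obtain u v where uv: "u \<in> V" "v \<in> V" "d u v = diam V E" using diam_att by blast
  have eu: "d u (f u) = diam V E"
    using I[OF uv(1) uv(2)] uv diam_ge[OF uv(1) fV[OF uv(1)]] by simp
  have ex: "\<And>x. x \<in> V \<Longrightarrow> d x (f x) = diam V E"
  proof -
    fix x assume x: "x \<in> V"
    have 1: "d x (f x) = d x u + d u (f x)" using I x uv(1) by blast
    have 2: "d u (f u) = d u x + d x (f u)" using I x uv(1) by blast
    have 3: "d u (f u) = d u (f x) + d (f x) (f u)" using I fV x uv(1) by blast
    have 4: "d x (f x) = d x (f u) + d (f u) (f x)" using I fV x uv(1) by blast
    have s1: "d x u = d u x" using dsym x uv(1) by blast
    have s2: "d (f x) (f u) = d (f u) (f x)" using dsym fV x uv(1) by blast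
    show "d x (f x) = diam V E" using 1 2 3 4 s1 s2 eu by linarith
  qed
  have sc: "self_centered V E" unfolding self_centered_def using ex fV by blast
  have uniq: "\<And>y a b. y \<in> V \<Longrightarrow> a \<in> V \<Longrightarrow> b \<in> V \<Longrightarrow> interval V E y a = V \<Longrightarrow> interval V E y b = V \<Longrightarrow> a = b"
  proof -
    fix y a b assume h: "y \<in> V" "a \<in> V" "b \<in> V" "interval V E y a = V" "interval V E y b = V"
    then have "d y a = d y b + d b a" "d y b = d y a + d a b" unfolding interval_def by blast+
    then have "d a b = 0" by linarith
    then show "a = b" using d0E h by blast
  qed
  have isym: "\<And>a b. a \<in> V \<Longrightarrow> b \<in> V \<Longrightarrow> interval V E a b = interval V E b a"
    unfolding interval_def using dsym by auto
  have inv: "\<And>y. y \<in> V \<Longrightarrow> f (f y) = y"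
  proof -
    fix y assume y: "y \<in> V"
    have "interval V E (f y) y = V" using isym f y fV by metis
    moreover have "interval V E (f y) (f (f y)) = V" using f fV y by blast
    ultimately show "f (f y) = y" using uniq fV y by metis
  qed
  define D where "D = real (diam V E)"
  have Dp': "D > 0" using Dp D_def by simp
  define K where "K = (\<lambda>_::'a. 2 / D)"
  have Ksol: "curv_solution V E K"
    unfolding curv_solution_def
  proof
    fix x assume x: "x \<in> V"
    have r: "(\<Sum>y\<in>V. real (d x y)) = (\<Sum>y\<in>V. real (d x (f y)))"
      by (rule sum.reindex_bij_witness[of _ f f]) (use inv fV in auto)
    have "(\<Sum>y\<in>V. real (d x y)) + (\<Sum>y\<in>V. real (d x (f y))) = (\<Sum>y\<in>V. D)"
    proof -
      have "\<And>y. y \<in> V \<Longrightarrow> real (d x y) + real (d x (f y)) = D"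
      proof -
        fix y assume y: "y \<in> V"
        have "d y (f y) = d y x + d x (f y)" using I x y by blast
        then show "real (d x y) + real (d x (f y)) = D" using ex[OF y] dsym[OF x y] D_def by simp
      qed
      then show ?thesis by (simp add: sum.distrib[symmetric])
    qed
    then have "2 * (\<Sum>y\<in>V. real (d x y)) = real (card V) * D" using r by simp
    then have "(\<Sum>y\<in>V. real (d x y)) * (2 / D) = real (card V)" using Dp' by (simp add: field_simps)
    then show "(\<Sum>y\<in>V. real (d x y) * K y) = real (card V)"
      unfolding K_def using sum_distrib_right[of "\<lambda>y. real (d x y)" V "2 / D"] by simp
  qed
  have "K ` V = {2 / D}" unfolding K_def using \<open>V \<noteq> {}\<close> by auto
  then have mK: "minK V K = 2 / D" unfolding minK_def by simp
  have "steinerberger_curvature V E K"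
    unfolding steinerberger_curvature_def
    using Ksol mK bound uv Dp D_def by auto
  then have "bonnet_myers_sharp V E" unfolding bonnet_myers_sharp_def using mK D_def by blast
  then show ?thesis using sc by blast
qed

end

theorem mainTheorem9:
  fixes V :: "'a set" and E :: "'a \<Rightarrow> 'a \<Rightarrow> bool"
  assumes "simple_graph V E" and "connected_graph V E" and "card V \<ge> 2"
    and "\<exists>K. curv_solution V E K"
  shows "antipodal V E \<longleftrightarrow> (self_centered V E \<and> bonnet_myers_sharp V E)"
proof -
  interpret G V E using assms(1,2) by unfold_locales
  show ?thesis
    using AtoB[OF _ assms(3)] BtoA[OF _ assms(3)] unfolding bonnet_myers_sharp_def by blast
qed

end
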